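(* Let $\lambda\in(1,\infty)\setminus\mathbb{N}$ and let $\phi:[0,1]\to(0,1]$ be a non-increasing function with $\phi(0)=1$ (so that $\omega(x)=\phi(|x|)$ for $|x|\le1$, $\omega(x)=0$ otherwise, is positive on its support $[-1,1]$). Then the subdivision scheme $S_{1,\mathbf{w}^\lambda}$ is uniformly convergent.
   Context: Put $w^\lambda_m=\phi(|m|/\lambda)$ for $m\in\mathbb{Z}$ with $|m|<\lambda$, and for $i\in\{0,1\}$ let $M_i=\{m\in\mathbb{Z}: m\equiv i \pmod 2,\ |m|<\lambda\}$. The scheme $S_{1,\mathbf{w}^\lambda}$ is the weighted local polynomial regression scheme of degree $1$: $(S\mathbf{f})_{2j+i}=\hat p(0)$ where $\hat p$ minimizes $\sum_{m\in M_i} w^\lambda_m (f_{j+(m+i)/2}-p(m))^2$ over polynomials $p$ of degree at most $1$ (it coincides with the degree-$0$ scheme). Explicitly, for $\mathbf{f}=(f_j)_{j\in\mathbb{Z}}$, $i\in\{0,1\}$, $j\in\mathbb{Z}$, \[ (S_{1,\mathbf{w}^\lambda}\mathbf{f})_{2j+i}=\frac{\sum_{m\in M_i} w^\lambda_m f_{j+(m+i)/2}}{\sum_{m\in M_i} w^\lambda_m}. \] Uniform convergence: for every bounded real sequence $\mathbf{f}^0$ there is a continuous $F$ with $\lim_{k\to\infty}\sup_j|(S^k\mathbf{f}^0)_j-F(2^{-k}j)|=0$. *)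

theory Defs
  imports "HOL-Analysis.Analysis"
begin

definition wlam :: "real \<Rightarrow> (real \<Rightarrow> real) \<Rightarrow> int \<Rightarrow> real" where
  "wlam lam phi m = phi (\<bar>real_of_int m\<bar> / lam)"

definition Mset :: "real \<Rightarrow> int \<Rightarrow> int set" where
  "Mset lam i = {m::int. m mod 2 = i mod 2 \<and> \<bar>real_of_int m\<bar> < lam}"

definition Sstep :: "real \<Rightarrow> (real \<Rightarrow> real) \<Rightarrow> (int \<Rightarrow> real) \<Rightarrow> int \<Rightarrow> real" where
  "Sstep lam phi f n =
     (let i = n mod 2; j = n div 2 in
        (\<Sum>m\<in>Mset lam i. wlam lam phi m * f (j + (m + i) div 2))
        / (\<Sum>m\<in>Mset lam i. wlam lam phi m))"

definition uniformly_convergent_scheme :: "((int \<Rightarrow> real) \<Rightarrow> (int \<Rightarrow> real)) \<Rightarrow> bool" where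
  "uniformly_convergent_scheme S \<longleftrightarrow>
     (\<forall>f0::int \<Rightarrow> real. bounded (range f0) \<longrightarrow>
        (\<exists>F::real \<Rightarrow> real. continuous_on UNIV F \<and>
           (\<forall>e>0. \<exists>K. \<forall>k\<ge>K. \<forall>j. \<bar>(S ^^ k) f0 j - F (real_of_int j / 2 ^ k)\<bar> \<le> e)))"

end

theory Submission
  imports Defs
begin


lemma geo_limit:
  fixes g :: "nat \<Rightarrow> real \<Rightarrow> real"
  assumes K: "0 \<le> K" and s: "0 < s" "s < 1"
    and st: "\<And>k x. \<bar>g (Suc k) x - g k x\<bar> \<le> K * s^k"
  shows "\<exists>F. \<forall>k x. \<bar>g k x - F x\<bar> \<le> K * s^k / (1 - s)"
proof -
  have tel: "\<bar>g k x - g (k + d) x\<bar> \<le> K * (s^k - s^(k+d)) / (1 - s)" for k d x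
  proof (induction d)
    case 0 then show ?case by simp
  next
    case (Suc d)
    have "\<bar>g k x - g (k + Suc d) x\<bar> \<le> \<bar>g k x - g (k + d) x\<bar> + \<bar>g (Suc (k + d)) x - g (k + d) x\<bar>"
      unfolding add_Suc_right by (smt (verit))
    also have "\<dots> \<le> K * (s^k - s^(k+d)) / (1 - s) + K * s^(k+d)" by (rule add_mono[OF Suc st])
    also have "\<dots> = K * (s^k - s^(k + Suc d)) / (1 - s)"
    proof -
      have p: "s^(k + Suc d) = s * s^(k+d)" by simp
      have "1 - s \<noteq> 0" using s by simp
      then show ?thesis unfolding p by (simp add: field_simps)
    qed
    finally show ?case .
  qed
  have tel2: "\<bar>g k x - g n x\<bar> \<le> K * s^k / (1 - s)" if "k \<le> n" for k n x
  proof -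
    from le_Suc_ex[OF that] obtain d where n: "n = k + d" by (elim exE)
    have h0: "0 \<le> K * s^(k+d)" using K s by simp
    have "K * (s^k - s^(k+d)) \<le> K * s^k" using h0 by (simp add: right_diff_distrib)
    then have "K * (s^k - s^(k+d)) / (1 - s) \<le> K * s^k / (1 - s)"
      using s by (intro divide_right_mono) auto
    then show ?thesis unfolding n by (rule order_trans[OF tel[of k x d]])
  qed
  have small: "\<exists>M. K * s^M / (1 - s) < e" if e0: "e > 0" for e
  proof -
    have "0 < e * (1 - s) / (K + 1)" using e0 s K by simp
    from real_arch_pow_inv[OF this s(2)] obtain M where M: "s^M < e * (1 - s) / (K + 1)" by blast
    have "K * s^M \<le> (K + 1) * s^M" using s by (intro mult_right_mono) auto
    also have "\<dots> < e * (1 - s)" using M K by (simp add: field_simps)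
    finally show ?thesis using s by (intro exI[of _ M]) (simp add: field_simps)
  qed
  have cauchy: "Cauchy (\<lambda>k. g k x)" for x
  proof (rule metric_CauchyI)
    fix e :: real assume "0 < e"
    then obtain M where M: "K * s^M / (1 - s) < e" using small by blast
    have "dist (g m x) (g n x) < e" if "m \<ge> M" "n \<ge> M" for m n
    proof -
      have "K * s^(min m n) / (1 - s) \<le> K * s^M / (1 - s)"
        using K s that by (intro divide_right_mono mult_left_mono power_decreasing) auto
      moreover have "\<bar>g m x - g n x\<bar> \<le> K * s^(min m n) / (1 - s)"
      proof (cases "m \<le> n")
        case True then show ?thesis using tel2[of m n x] by (simp add: min_def)
      next
        case False then show ?thesis using tel2[of n m x] by (simp add: min_def abs_minus_commute[of "g m x"])
      qed
      ultimately show ?thesis using M by (simp add: dist_real_def)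
    qed
    then show "\<exists>M. \<forall>m\<ge>M. \<forall>n\<ge>M. dist (g m x) (g n x) < e" by blast
  qed
  define F where "F x = lim (\<lambda>k. g k x)" for x
  have lim: "(\<lambda>k. g k x) \<longlonglongrightarrow> F x" for x
    using cauchy[of x] unfolding F_def by (simp add: Cauchy_convergent_iff convergent_LIMSEQ_iff)
  have "\<bar>g k x - F x\<bar> \<le> K * s^k / (1 - s)" for k x
  proof -
    have "(\<lambda>n. \<bar>g k x - g n x\<bar>) \<longlonglongrightarrow> \<bar>g k x - F x\<bar>"
      by (intro tendsto_intros lim)
    then show ?thesis by (rule LIMSEQ_le_const2) (use tel2 in blast)
  qed
  then show ?thesis by blast
qed

lemma cont_limit:
  fixes g :: "nat \<Rightarrow> real \<Rightarrow> real"
  assumes K: "0 \<le> K" and s: "0 < s" "s < 1"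
    and lim: "\<And>k x. \<bar>g k x - F x\<bar> \<le> K * s^k / (1 - s)"
    and loc: "\<And>k x y. \<bar>x - y\<bar> < 1 / 2^k \<Longrightarrow> \<bar>g k x - g k y\<bar> \<le> K * s^k"
  shows "continuous_on UNIV F"
  unfolding continuous_on_iff
proof (intro ballI allI impI)
  fix x :: real and e :: real assume e: "0 < e"
  have "0 < e * (1 - s) / (3 * K + 1)" using e s K by simp
  from real_arch_pow_inv[OF this s(2)] obtain k where k: "s^k < e * (1 - s) / (3 * K + 1)" by blast
  have E: "3 * (K * s^k / (1 - s)) < e"
  proof -
    have "3 * K * s^k \<le> (3 * K + 1) * s^k" using s by (intro mult_right_mono) auto
    also have "\<dots> < e * (1 - s)" using k K by (simp add: field_simps)
    finally show ?thesis using s by (simp add: field_simps)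
  qed
  have Kk: "K * s^k \<le> K * s^k / (1 - s)" using K s by (simp add: field_simps)
  show "\<exists>d>0. \<forall>y\<in>UNIV. dist y x < d \<longrightarrow> dist (F y) (F x) < e"
  proof (intro exI[of _ "1 / 2^k"] conjI ballI impI)
    fix y assume "dist y x < 1 / 2^k"
    then have "\<bar>g k y - g k x\<bar> \<le> K * s^k" using loc by (simp add: dist_real_def)
    then have "\<bar>F y - F x\<bar> \<le> 3 * (K * s^k / (1 - s))"
      using lim[of k x] lim[of k y] Kk by linarith
    then show "dist (F y) (F x) < e" using E by (simp add: dist_real_def)
  qed simp
qed



locale sch =
  fixes lam :: real and phi :: "real \<Rightarrow> real"
  assumes lam1: "lam > 1"
    and phipos: "\<And>x. x \<in> {0..1} \<Longrightarrow> 0 < phi x \<and> phi x \<le> 1"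
    and phimono: "antimono_on {0..1} phi"
begin

definition W0 :: nat where "W0 = card {-\<lceil>lam\<rceil>..\<lceil>lam\<rceil>}"
definition dl :: real where "dl = phi 1 / (2 * real W0)"

lemma Mset_sub: "Mset lam i \<subseteq> {-\<lceil>lam\<rceil>..\<lceil>lam\<rceil>}"
  unfolding Mset_def
  by (auto simp: abs_less_iff) (linarith+)

lemma Mset_fin: "finite (Mset lam i)"
  using Mset_sub finite_subset by blast

lemma W0_ge1: "W0 \<ge> 1"
proof -
  have "0 \<in> {-\<lceil>lam\<rceil>..\<lceil>lam\<rceil>}" using lam1 by auto
  then show ?thesis unfolding W0_def
    by (metis One_nat_def Suc_leI card_gt_0_iff empty_iff finite_atLeastAtMost_int)
qed

lemma w_bounds:
  assumes "m \<in> Mset lam i"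
  shows "phi 1 \<le> wlam lam phi m \<and> 0 < wlam lam phi m \<and> wlam lam phi m \<le> 1"
proof -
  have "\<bar>real_of_int m\<bar> < lam" using assms by (simp add: Mset_def)
  then have x: "\<bar>real_of_int m\<bar> / lam \<in> {0..1}" using lam1 by auto
  then have "phi 1 \<le> phi (\<bar>real_of_int m\<bar> / lam)"
    using phimono by (auto intro!: monotone_onD[OF phimono])
  then show ?thesis using phipos[OF x] unfolding wlam_def by auto
qed

lemma phi1: "0 < phi 1" using phipos by auto

lemma dl_pos: "0 < dl" and dl_half: "dl \<le> 1/2"
proof -
  show "0 < dl" unfolding dl_def using phi1 W0_ge1 by auto
  have "phi 1 \<le> 1" using phipos by auto
  then show "dl \<le> 1/2" unfolding dl_def using W0_ge1
    by (simp add: divide_le_eq)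
qed

lemma Sstep_alt:
  "Sstep lam phi f n =
    (\<Sum>m\<in>Mset lam (n mod 2). wlam lam phi m * f ((n + m) div 2)) / (\<Sum>m\<in>Mset lam (n mod 2). wlam lam phi m)"
proof -
  have "\<And>m. n div 2 + (m + n mod 2) div 2 = (n + m) div 2"
  proof -
    fix m :: int
    show "n div 2 + (m + n mod 2) div 2 = (n + m) div 2" by presburger
  qed
  then show ?thesis unfolding Sstep_def Let_def by simp
qed

lemma step_bounds:
  assumes H: "\<And>k. \<bar>2 * real_of_int k - real_of_int n\<bar> < lam \<Longrightarrow> a \<le> f k \<and> f k \<le> b"
    and kk: "\<bar>2 * kk - n\<bar> \<le> 1"
  shows "a + dl * (f kk - a) \<le> Sstep lam phi f n \<and> Sstep lam phi f n \<le> b - dl * (b - f kk)"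
proof -
  define M where "M = Mset lam (n mod 2)"
  define w where "w = wlam lam phi"
  define W where "W = (\<Sum>m\<in>M. w m)"
  define x where "x m = f ((n + m) div 2)" for m
  have fin: "finite M" unfolding M_def by (rule Mset_fin)
  have xb: "a \<le> x m \<and> x m \<le> b" if "m \<in> M" for m
  proof -
    have "m mod 2 = n mod 2" "\<bar>real_of_int m\<bar> < lam" using that by (auto simp: M_def Mset_def)
    then have "2 * ((n + m) div 2) = n + m" by presburger
    then have "2 * real_of_int ((n + m) div 2) - real_of_int n = real_of_int m"
      by (metis add_diff_cancel_left' of_int_add of_int_diff of_int_mult of_int_numeral)
    then show ?thesis unfolding x_def using H \<open>\<bar>real_of_int m\<bar> < lam\<close> by metis
  qed
  define m0 where "m0 = 2 * kk - n"
  have m0M: "m0 \<in> M"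
  proof -
    have "\<bar>real_of_int m0\<bar> \<le> 1" using kk unfolding m0_def by linarith
    then show ?thesis unfolding M_def Mset_def m0_def using lam1 by auto presburger
  qed
  have xm0: "x m0 = f kk" unfolding x_def m0_def by simp
  have wpos: "\<And>m. m \<in> M \<Longrightarrow> 0 < w m" "\<And>m. m \<in> M \<Longrightarrow> w m \<le> 1"
    using w_bounds unfolding w_def M_def by auto
  have wnn: "\<And>m. m \<in> M \<Longrightarrow> 0 \<le> w m" using wpos(1) less_imp_le by blast
  have wm0: "phi 1 \<le> w m0" using w_bounds m0M unfolding w_def M_def by auto
  have Wpos: "0 < W" unfolding W_def using fin m0M wpos
    by (meson sum_pos2 less_imp_le)
  have "W \<le> (\<Sum>m\<in>M. 1)" unfolding W_def using wpos by (intro sum_mono) auto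
  also have "\<dots> = real (card M)" by simp
  also have "\<dots> \<le> real W0" unfolding W0_def M_def
    using Mset_sub by (intro of_nat_mono card_mono) auto
  finally have WW0: "W \<le> real W0" .
  have dlW: "dl \<le> w m0 / W"
  proof -
    have "dl \<le> phi 1 / W0" unfolding dl_def using phi1 W0_ge1
      by (simp add: frac_le)
    also have "\<dots> \<le> phi 1 / W" using phi1 Wpos WW0 by (simp add: frac_le)
    also have "\<dots> \<le> w m0 / W" using wm0 Wpos by (simp add: divide_right_mono)
    finally show ?thesis .
  qed
  have S: "Sstep lam phi f n = (\<Sum>m\<in>M. w m * x m) / W"
    unfolding Sstep_alt M_def w_def W_def x_def by simp
  have lo: "w m0 * (x m0 - a) \<le> (\<Sum>m\<in>M. w m * (x m - a))"
    using fin m0M xb wpos by (intro member_le_sum) (auto intro!: mult_nonneg_nonneg simp: wnn)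
  have hi: "w m0 * (b - x m0) \<le> (\<Sum>m\<in>M. w m * (b - x m))"
    using fin m0M xb wpos by (intro member_le_sum) (auto intro!: mult_nonneg_nonneg simp: wnn)
  have e1: "(\<Sum>m\<in>M. w m * (x m - a)) = (\<Sum>m\<in>M. w m * x m) - a * W"
    unfolding W_def by (simp add: algebra_simps sum_subtractf sum_distrib_left)
  have e2: "(\<Sum>m\<in>M. w m * (b - x m)) = b * W - (\<Sum>m\<in>M. w m * x m)"
    unfolding W_def by (simp add: algebra_simps sum_subtractf sum_distrib_left)
  have fa: "0 \<le> f kk - a" "0 \<le> b - f kk" using xb[OF m0M] xm0 by auto
  have "dl * (f kk - a) \<le> (w m0 / W) * (f kk - a)" using mult_right_mono[OF dlW fa(1)] by simp
  also have "\<dots> \<le> (\<Sum>m\<in>M. w m * (x m - a)) / W" using lo xm0 Wpos by (simp add: divide_right_mono)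
  also have "\<dots> = Sstep lam phi f n - a" unfolding S e1 using Wpos by (simp add: field_simps)
  finally have 1: "a + dl * (f kk - a) \<le> Sstep lam phi f n" by simp
  have "dl * (b - f kk) \<le> (w m0 / W) * (b - f kk)" using mult_right_mono[OF dlW fa(2)] by simp
  also have "\<dots> \<le> (\<Sum>m\<in>M. w m * (b - x m)) / W" using hi xm0 Wpos by (simp add: divide_right_mono)
  also have "\<dots> = b - Sstep lam phi f n" unfolding S e2 using Wpos by (simp add: field_simps)
  finally have 2: "Sstep lam phi f n \<le> b - dl * (b - f kk)" by simp
  show ?thesis using 1 2 by simp
qed


lemma int_core:
  fixes X n P :: int
  assumes "\<bar>2*X - n\<bar> \<le> 2*P - 1"
  shows "\<exists>j. \<bar>2*j - n\<bar> \<le> 1 \<and> \<bar>X - j\<bar> \<le> P - 1"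
  using assms by presburger

lemma levels:
  assumes "\<And>k. \<bar>2^L * real_of_int k - real_of_int n\<bar> \<le> lam * (2^L - 1) \<Longrightarrow> a \<le> f k \<and> f k \<le> b"
  shows "a \<le> (Sstep lam phi ^^ L) f n \<and> (Sstep lam phi ^^ L) f n \<le> b \<and>
    (\<forall>k0. \<bar>2^L * k0 - n\<bar> \<le> 2^L - 1 \<longrightarrow> a + dl^L * (f k0 - a) \<le> (Sstep lam phi ^^ L) f n
        \<and> (Sstep lam phi ^^ L) f n \<le> b - dl^L * (b - f k0))"
  using assms
proof (induction L arbitrary: n)
  case 0
  have "a \<le> f n \<and> f n \<le> b" using 0[of n] by simp
  then show ?case by auto
next
  case (Suc L)
  define h where "h = (Sstep lam phi ^^ L) f"
  have eq: "(Sstep lam phi ^^ Suc L) f = Sstep lam phi h" by (simp add: h_def)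
  have hb: "a \<le> h j \<and> h j \<le> b \<and>
    (\<forall>k0. \<bar>2^L * k0 - j\<bar> \<le> 2^L - 1 \<longrightarrow> a + dl^L * (f k0 - a) \<le> h j \<and> h j \<le> b - dl^L * (b - f k0))"
    if j: "\<bar>2 * real_of_int j - real_of_int n\<bar> < lam" for j
  proof -
    have "a \<le> f k \<and> f k \<le> b" if k: "\<bar>2^L * real_of_int k - real_of_int j\<bar> \<le> lam * (2^L - 1)" for k
    proof -
      have e: "2^Suc L * real_of_int k - real_of_int n = 2 * (2^L * real_of_int k - real_of_int j) + (2 * real_of_int j - real_of_int n)"
        by (simp add: algebra_simps)
      have "\<bar>2^Suc L * real_of_int k - real_of_int n\<bar> \<le> 2 * (lam * (2^L - 1)) + lam"
        unfolding e using k j by (smt (verit))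
      also have "\<dots> = lam * (2^Suc L - 1)" by (simp add: algebra_simps)
      finally show ?thesis using Suc.prems by blast
    qed
    then show ?thesis using Suc.IH[of j] unfolding h_def by blast
  qed
  have hb1: "a \<le> h j \<and> h j \<le> b \<and>
    (\<forall>k0. \<bar>2^L * k0 - j\<bar> \<le> 2^L - 1 \<longrightarrow> a + dl^L * (f k0 - a) \<le> h j \<and> h j \<le> b - dl^L * (b - f k0))"
    if j: "\<bar>2 * j - n\<bar> \<le> 1" for j
  proof -
    have "real_of_int \<bar>2 * j - n\<bar> \<le> 1" using j by simp
    then have "\<bar>2 * real_of_int j - real_of_int n\<bar> < lam" using lam1 by simp
    then show ?thesis by (rule hb)
  qed
  have SB: "a + dl * (h j - a) \<le> Sstep lam phi h n \<and> Sstep lam phi h n \<le> b - dl * (b - h j)"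
    if "\<bar>2 * j - n\<bar> \<le> 1" for j
    using that by (intro step_bounds) (use hb in auto)
  have range: "a \<le> Sstep lam phi h n \<and> Sstep lam phi h n \<le> b"
  proof -
    define j where "j = (n + 1) div 2"
    have j1: "\<bar>2 * j - n\<bar> \<le> 1" unfolding j_def by presburger
    have "0 \<le> dl * (h j - a)" "0 \<le> dl * (b - h j)"
      using hb1[OF j1] dl_pos by auto
    then show ?thesis using SB[OF j1] by linarith
  qed
  have core: "a + dl^Suc L * (f k0 - a) \<le> Sstep lam phi h n \<and> Sstep lam phi h n \<le> b - dl^Suc L * (b - f k0)"
    if k0: "\<bar>2^Suc L * k0 - n\<bar> \<le> 2^Suc L - 1" for k0
  proof -
    have "\<bar>2*(2^L * k0) - n\<bar> \<le> 2*2^L - 1" using k0 by (simp add: mult.assoc)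
    from int_core[OF this] obtain j where j: "\<bar>2 * j - n\<bar> \<le> 1" "\<bar>2^L * k0 - j\<bar> \<le> 2^L - 1" by blast
    have hj: "a + dl^L * (f k0 - a) \<le> h j" "h j \<le> b - dl^L * (b - f k0)" using hb1[OF j(1)] j(2) by auto
    have "a + dl^Suc L * (f k0 - a) = a + dl * (dl^L * (f k0 - a))" by simp
    also have "\<dots> \<le> a + dl * (h j - a)" using hj(1) dl_pos by (intro add_left_mono mult_left_mono) auto
    also have "\<dots> \<le> Sstep lam phi h n" using SB[OF j(1)] by simp
    finally have 1: "a + dl^Suc L * (f k0 - a) \<le> Sstep lam phi h n" .
    have "Sstep lam phi h n \<le> b - dl * (b - h j)" using SB[OF j(1)] by simp
    also have "\<dots> \<le> b - dl * (dl^L * (b - f k0))" using hj(2) dl_pos by (intro diff_left_mono mult_left_mono) auto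
    also have "\<dots> = b - dl^Suc L * (b - f k0)" by simp
    finally show ?thesis using 1 by simp
  qed
  show ?case unfolding eq using range core by blast
qed


definition Ob :: "int \<Rightarrow> (int \<Rightarrow> real) \<Rightarrow> real \<Rightarrow> bool" where
  "Ob R f c \<longleftrightarrow> (\<forall>k k'. \<bar>k - k'\<bar> \<le> R \<longrightarrow> \<bar>f k - f k'\<bar> \<le> c)"

lemma div_bounds:
  fixes x Q :: int assumes "Q > 0"
  shows "Q * (x div Q) \<le> x \<and> x - Q < Q * (x div Q)"
proof -
  have "Q * (x div Q) + x mod Q = x" by (metis mult.commute div_mult_mod_eq)
  moreover have "0 \<le> x mod Q" "x mod Q < Q" using assms by auto
  ultimately show ?thesis by linarith
qed

lemma window:
  assumes R: "2*lam \<le> real_of_int R" and ob: "Ob R f c" and nn: "\<bar>n - n'\<bar> \<le> R"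
  shows "\<exists>a. (\<forall>k. \<bar>2^L * real_of_int k - real_of_int n\<bar> \<le> lam * (2^L - 1) \<longrightarrow> a \<le> f k \<and> f k \<le> a + c)
          \<and> (\<forall>k. \<bar>2^L * real_of_int k - real_of_int n'\<bar> \<le> lam * (2^L - 1) \<longrightarrow> a \<le> f k \<and> f k \<le> a + c)"
proof -
  define P :: real where "P = 2^L"
  have P1: "1 \<le> P" unfolding P_def by simp
  define U where "U = {k. \<bar>P * real_of_int k - real_of_int n\<bar> \<le> lam * (P - 1) \<or> \<bar>P * real_of_int k - real_of_int n'\<bar> \<le> lam * (P - 1)}"
  have close: "\<bar>k - k'\<bar> \<le> R" if "k \<in> U" "k' \<in> U" for k k'
  proof -
    have nnr: "\<bar>real_of_int n - real_of_int n'\<bar> \<le> real_of_int R" using nn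
      by (metis of_int_abs of_int_diff of_int_le_iff)
    have i1: "\<bar>P * real_of_int k - P * real_of_int k'\<bar> \<le> 2*lam*(P-1) + real_of_int R"
      using that nnr unfolding U_def by auto
    have i2: "2*lam*(P-1) \<le> real_of_int R * (P - 1)" using R P1 by (intro mult_right_mono) auto
    have eq: "\<bar>P * real_of_int k - P * real_of_int k'\<bar> = P * \<bar>real_of_int k - real_of_int k'\<bar>"
      using P1 by (simp add: right_diff_distrib[symmetric] abs_mult)
    have eq2: "real_of_int R * (P - 1) + real_of_int R = P * real_of_int R" by (simp add: algebra_simps)
    have "P * \<bar>real_of_int k - real_of_int k'\<bar> \<le> P * real_of_int R"
      using i1 i2 eq eq2 by linarith
    then have "\<bar>real_of_int k - real_of_int k'\<bar> \<le> real_of_int R" using P1 by simp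
    then show ?thesis by (metis of_int_abs of_int_diff of_int_le_iff)
  qed
  define k1 where "k1 = n div 2^L"
  have "(2::int)^L * k1 \<le> n \<and> n - 2^L < 2^L * k1" unfolding k1_def by (rule div_bounds) simp
  then have "\<bar>(2::int)^L * k1 - n\<bar> \<le> 2^L - 1" by linarith
  then have "real_of_int \<bar>(2::int)^L * k1 - n\<bar> \<le> real_of_int (2^L - 1)" by linarith
  then have "\<bar>P * real_of_int k1 - real_of_int n\<bar> \<le> 1 * (P - 1)" unfolding P_def by simp
  also have "\<dots> \<le> lam * (P - 1)" using lam1 P1 by (intro mult_right_mono) auto
  finally have k1U: "k1 \<in> U" unfolding U_def by auto
  have Usub: "U \<subseteq> {k1 - R..k1 + R}" using close[OF k1U] by force
  have finU: "finite U" using Usub finite_subset by blast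
  define a where "a = Min (f ` U)"
  have "a \<in> f ` U" unfolding a_def using finU k1U by (intro Min_in) auto
  then obtain km where km: "km \<in> U" "f km = a" by auto
  have ab: "a \<le> f k \<and> f k \<le> a + c" if "k \<in> U" for k
  proof -
    have "a \<le> f k" unfolding a_def using finU that by auto
    moreover have "\<bar>f k - f km\<bar> \<le> c" using ob close[OF that km(1)] unfolding Ob_def by blast
    ultimately show ?thesis using km by linarith
  qed
  show ?thesis by (rule exI[of _ a]) (use ab in \<open>auto simp: U_def P_def\<close>)
qed

lemma nonexp:
  assumes R: "2*lam \<le> real_of_int R" and ob: "Ob R f c"
  shows "Ob R ((Sstep lam phi ^^ L) f) c"
  unfolding Ob_def
proof (intro allI impI)
  fix n n' :: int assume nn: "\<bar>n - n'\<bar> \<le> R"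
  from window[OF R ob nn, of L] obtain a where
    a1: "\<And>k. \<bar>2^L * real_of_int k - real_of_int n\<bar> \<le> lam * (2^L - 1) \<Longrightarrow> a \<le> f k \<and> f k \<le> a + c"
    and a2: "\<And>k. \<bar>2^L * real_of_int k - real_of_int n'\<bar> \<le> lam * (2^L - 1) \<Longrightarrow> a \<le> f k \<and> f k \<le> a + c"
    by blast
  show "\<bar>(Sstep lam phi ^^ L) f n - (Sstep lam phi ^^ L) f n'\<bar> \<le> c"
    using levels[where L=L and n=n and a=a and b="a+c" and f=f, OF a1] levels[where L=L and n=n' and a=a and b="a+c" and f=f, OF a2] by auto
qed

lemma contract:
  assumes R: "2*lam \<le> real_of_int R" and L: "R + 1 \<le> 2^L" and ob: "Ob R f c"
  shows "Ob R ((Sstep lam phi ^^ L) f) ((1 - dl^L) * c)"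
  unfolding Ob_def
proof (intro allI impI)
  fix n n' :: int assume nn: "\<bar>n - n'\<bar> \<le> R"
  from window[OF R ob nn, of L] obtain a where
    a1: "\<And>k. \<bar>2^L * real_of_int k - real_of_int n\<bar> \<le> lam * (2^L - 1) \<Longrightarrow> a \<le> f k \<and> f k \<le> a + c"
    and a2: "\<And>k. \<bar>2^L * real_of_int k - real_of_int n'\<bar> \<le> lam * (2^L - 1) \<Longrightarrow> a \<le> f k \<and> f k \<le> a + c"
    by blast
  define Q :: int where "Q = 2^L"
  define k0 where "k0 = (min n n' + Q - 1) div Q"
  have "Q * k0 \<le> min n n' + Q - 1 \<and> min n n' + Q - 1 - Q < Q * k0"
    unfolding k0_def by (rule div_bounds) (simp add: Q_def)
  then have c1: "\<bar>2^L * k0 - n\<bar> \<le> 2^L - 1" and c2: "\<bar>2^L * k0 - n'\<bar> \<le> 2^L - 1"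
    using L nn unfolding Q_def by auto
  have fk0: "a \<le> f k0" "f k0 \<le> a + c"
  proof -
    have "real_of_int \<bar>2^L * k0 - n\<bar> \<le> real_of_int (2^L - 1)" using c1 by linarith
    then have "\<bar>2^L * real_of_int k0 - real_of_int n\<bar> \<le> 1 * (2^L - 1)" by simp
    also have "\<dots> \<le> lam * (2^L - 1)" using lam1 by (intro mult_right_mono) auto
    finally show "a \<le> f k0" "f k0 \<le> a + c" using a1 by auto
  qed
  have A: "a + dl^L * (f k0 - a) \<le> (Sstep lam phi ^^ L) f n \<and> (Sstep lam phi ^^ L) f n \<le> a + c - dl^L * (a + c - f k0)"
    using levels[where L=L and n=n and a=a and b="a+c" and f=f, OF a1] c1 by blast
  have B: "a + dl^L * (f k0 - a) \<le> (Sstep lam phi ^^ L) f n' \<and> (Sstep lam phi ^^ L) f n' \<le> a + c - dl^L * (a + c - f k0)"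
    using levels[where L=L and n=n' and a=a and b="a+c" and f=f, OF a2] c2 by blast
  have "a + c - dl^L * (a + c - f k0) - (a + dl^L * (f k0 - a)) = (1 - dl^L) * c"
    by (simp add: algebra_simps)
  then show "\<bar>(Sstep lam phi ^^ L) f n - (Sstep lam phi ^^ L) f n'\<bar> \<le> (1 - dl^L) * c"
    using A B by linarith
qed


lemma step_range:
  assumes H: "\<And>k. \<bar>2 * real_of_int k - real_of_int n\<bar> < lam \<Longrightarrow> a \<le> f k \<and> f k \<le> b"
  shows "a \<le> Sstep lam phi f n \<and> Sstep lam phi f n \<le> b"
proof -
  define j where "j = (n + 1) div 2"
  have j1: "\<bar>2 * j - n\<bar> \<le> 1" unfolding j_def by presburger
  have "real_of_int \<bar>2 * j - n\<bar> \<le> 1" using j1 by simp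
  then have "\<bar>2 * real_of_int j - real_of_int n\<bar> < lam" using lam1 by simp
  then have fj: "a \<le> f j \<and> f j \<le> b" by (rule H)
  have "0 \<le> dl * (f j - a)" "0 \<le> dl * (b - f j)"
    using fj dl_pos by auto
  then show ?thesis using step_bounds[where f=f and a=a and b=b and n=n and kk=j, OF H j1] by linarith
qed

lemma Ob_mono: "Ob R f c \<Longrightarrow> c \<le> c' \<Longrightarrow> Ob R f c'"
  unfolding Ob_def using order_trans by blast

lemma geo_bound:
  fixes R :: int
  assumes R: "2*lam \<le> real_of_int R" and B: "\<And>j. \<bar>ff j\<bar> \<le> B"
  shows "\<exists>K s. 0 \<le> K \<and> 0 < s \<and> s < 1 \<and> (\<forall>m. Ob R ((Sstep lam phi ^^ m) ff) (K * s^m))"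
proof -
  have "(2::real) < real_of_int R" using R lam1 by linarith
  then have R2: "2 < R" by simp
  define L where "L = nat R"
  have L1: "1 \<le> L" unfolding L_def using R2 by simp
  have "int (nat R) < int (2 ^ nat R)" using less_exp[of "nat R"] by (simp only: of_nat_less_iff)
  then have LR: "R + 1 \<le> 2^L" unfolding L_def using R2 by simp
  have B0: "0 \<le> B" using B[of 0] by linarith
  have ob0: "Ob R ff (2*B)" unfolding Ob_def
  proof (intro allI impI)
    fix k k' :: int
    have "\<bar>ff k - ff k'\<bar> \<le> \<bar>ff k\<bar> + \<bar>ff k'\<bar>" by (rule abs_triangle_ineq4)
    then show "\<bar>ff k - ff k'\<bar> \<le> 2 * B" using B[of k] B[of k'] by linarith
  qed
  have dlL: "0 < dl^L" "dl^L < 1"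
  proof -
    show "0 < dl^L" using dl_pos by simp
    have "dl^L \<le> dl^1" using L1 dl_pos dl_half by (intro power_decreasing) auto
    then show "dl^L < 1" using dl_half by simp
  qed
  define rr where "rr = 1 - dl^L"
  have rho: "0 < rr" "rr < 1" unfolding rr_def using dlL by auto
  define s where "s = root L rr"
  have sL: "s^L = rr" unfolding s_def using L1 rho by simp
  have s0: "0 < s" unfolding s_def using L1 rho by simp
  have s1: "s < 1" unfolding s_def using L1 rho by simp
  define K where "K = 2 * B / rr"
  have K0: "0 \<le> K" unfolding K_def using B0 rho by simp
  have "Ob R ((Sstep lam phi ^^ m) ff) (K * s^m)" for m
  proof (induction m rule: less_induct)
    case (less m)
    show ?case
    proof (cases "m < L")
      case True
      have ob: "Ob R ((Sstep lam phi ^^ m) ff) (2*B)" by (rule nonexp[OF R ob0])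
      have "s^L \<le> s^m" using True s0 s1 by (intro power_decreasing) auto
      then have "2 * B * rr \<le> 2 * B * (s ^ m)" using B0 sL by (intro mult_left_mono) auto
      then have "2*B \<le> K * s^m" unfolding K_def using rho by (simp add: field_simps)
      then show ?thesis by (rule Ob_mono[OF ob])
    next
      case False
      then have "L \<le> m" by simp
      from le_Suc_ex[OF this] obtain d where md: "m = L + d" by (elim exE)
      have eq: "(Sstep lam phi ^^ (L + d)) ff = (Sstep lam phi ^^ L) ((Sstep lam phi ^^ d) ff)"
        by (simp add: funpow_add)
      have "d < m" using md L1 by simp
      then have ih: "Ob R ((Sstep lam phi ^^ d) ff) (K * s^d)" by (rule less.IH)
      have c: "Ob R ((Sstep lam phi ^^ L) ((Sstep lam phi ^^ d) ff)) ((1 - dl^L) * (K * s^d))"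
        by (rule contract[OF R LR ih])
      have "(1 - dl^L) * (K * s^d) = K * s^(L + d)"
        unfolding rr_def[symmetric] sL[symmetric] by (simp add: power_add)
      then show ?thesis unfolding md eq by (metis c)
    qed
  qed
  then show ?thesis using K0 s0 s1 by blast
qed


lemma main: "uniformly_convergent_scheme (Sstep lam phi)"
  unfolding uniformly_convergent_scheme_def
proof (intro allI impI)
  fix f0 :: "int \<Rightarrow> real" assume bd: "bounded (range f0)"
  then obtain B where B: "\<And>j. \<bar>f0 j\<bar> \<le> B" unfolding bounded_iff by auto
  define R where "R = \<lceil>2*lam\<rceil> + 1"
  have R: "2*lam \<le> real_of_int R" unfolding R_def using le_of_int_ceiling[of "2*lam"] by linarith
  obtain K s where Ks: "0 \<le> K \<and> 0 < s \<and> s < 1 \<and> (\<forall>m. Ob R ((Sstep lam phi ^^ m) f0) (K * s^m))"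
    using geo_bound[where ff=f0 and B=B and R=R, OF R B] by (elim exE) blast
  have K0: "0 \<le> K" and s: "0 < s" "s < 1" using Ks by auto
  have ob: "\<And>m. Ob R ((Sstep lam phi ^^ m) f0) (K * s^m)" using Ks by blast
  define g where "g k x = (Sstep lam phi ^^ k) f0 \<lfloor>2^k * x\<rfloor>" for k :: nat and x :: real
  have st: "\<bar>g (Suc k) x - g k x\<bar> \<le> K * s^k" for k and x :: real
  proof -
    define h where "h = (Sstep lam phi ^^ k) f0"
    define y :: real where "y = 2^k * x"
    define n where "n = \<lfloor>y\<rfloor>"
    define m where "m = \<lfloor>2 * y\<rfloor>"
    have gS: "g (Suc k) x = Sstep lam phi h m" unfolding g_def h_def m_def y_def
      by (simp add: mult.assoc)
    have gk: "g k x = h n" unfolding g_def h_def n_def y_def by simp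
    have fl: "real_of_int n \<le> y" "y < real_of_int n + 1" "real_of_int m \<le> 2*y" "2*y < real_of_int m + 1"
      unfolding n_def m_def by linarith+
    have "real_of_int (2*n) < real_of_int (m + 1)" "real_of_int m < real_of_int (2*n + 2)"
      using fl by simp_all
    then have mn: "2*n \<le> m" "m \<le> 2*n + 1" by linarith+
    define c where "c = K * s^k"
    have obh: "Ob R h c" unfolding h_def c_def by (rule ob)
    have H: "h n - c \<le> h k' \<and> h k' \<le> h n + c" if k': "\<bar>2 * real_of_int k' - real_of_int m\<bar> < lam" for k'
    proof -
      have "real_of_int m \<le> 2 * real_of_int n + 1" "2 * real_of_int n \<le> real_of_int m"
        using mn by linarith+
      then have "\<bar>real_of_int k' - real_of_int n\<bar> < real_of_int R" using k' R lam1 by linarith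
      then have "real_of_int \<bar>k' - n\<bar> < real_of_int R" by simp
      then have "\<bar>k' - n\<bar> \<le> R" by linarith
      then have "\<bar>h k' - h n\<bar> \<le> c" using obh unfolding Ob_def by blast
      then show ?thesis by linarith
    qed
    have "h n - c \<le> Sstep lam phi h m \<and> Sstep lam phi h m \<le> h n + c"
      by (rule step_range) (use H in blast)
    then show ?thesis unfolding gS gk c_def by linarith
  qed
  obtain F where F: "\<And>k x. \<bar>g k x - F x\<bar> \<le> K * s^k / (1 - s)"
    using geo_limit[where g=g and K=K and s=s, OF K0 s st] by blast
  have loc: "\<bar>g k x - g k y\<bar> \<le> K * s^k" if xy: "\<bar>x - y\<bar> < 1 / 2^k" for k and x y :: real
  proof -
    have "2^k * \<bar>x - y\<bar> < 1" using xy by (simp add: field_simps)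
    then have "\<bar>2^k * x - 2^k * y\<bar> < 1" by (simp add: abs_mult right_diff_distrib[symmetric])
    then have "real_of_int \<lfloor>2^k * x\<rfloor> < real_of_int (\<lfloor>2^k * y\<rfloor> + 2)"
       "real_of_int \<lfloor>2^k * y\<rfloor> < real_of_int (\<lfloor>2^k * x\<rfloor> + 2)" by linarith+
    then have "\<bar>\<lfloor>2^k * x\<rfloor> - \<lfloor>2^k * y\<rfloor>\<bar> \<le> 1" by linarith
    moreover have "(1::int) \<le> R" using R lam1 unfolding R_def by linarith
    ultimately have "\<bar>\<lfloor>(2::real)^k * x\<rfloor> - \<lfloor>2^k * y\<rfloor>\<bar> \<le> R" by linarith
    then show ?thesis using ob[of k] unfolding Ob_def g_def by blast
  qed
  have cont: "continuous_on UNIV F" by (rule cont_limit[where g=g and K=K and s=s and F=F, OF K0 s F loc])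
  have conv: "\<exists>K1. \<forall>k\<ge>K1. \<forall>j. \<bar>(Sstep lam phi ^^ k) f0 j - F (real_of_int j / 2 ^ k)\<bar> \<le> e"
    if e: "e > 0" for e
  proof -
    have "0 < e * (1 - s) / (K + 1)" using e s K0 by simp
    from real_arch_pow_inv[OF this s(2)] obtain K1 where K1: "s^K1 < e * (1 - s) / (K + 1)" by blast
    have E: "K * s^K1 / (1 - s) \<le> e"
    proof -
      have "K * s^K1 \<le> (K + 1) * s^K1" using s by (intro mult_right_mono) auto
      also have "\<dots> < e * (1 - s)" using K1 K0 by (simp add: field_simps)
      finally show ?thesis using s by (simp add: field_simps)
    qed
    have "\<bar>(Sstep lam phi ^^ k) f0 j - F (real_of_int j / 2 ^ k)\<bar> \<le> e" if k: "k \<ge> K1" for k j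
    proof -
      have "g k (real_of_int j / 2^k) = (Sstep lam phi ^^ k) f0 j" unfolding g_def by simp
      then have "\<bar>(Sstep lam phi ^^ k) f0 j - F (real_of_int j / 2 ^ k)\<bar> \<le> K * s^k / (1 - s)"
        using F[of k "real_of_int j / 2^k"] by simp
      also have "\<dots> \<le> K * s^K1 / (1 - s)"
        using k s K0 by (intro divide_right_mono mult_left_mono power_decreasing) auto
      finally show ?thesis using E by linarith
    qed
    then show ?thesis by blast
  qed
  show "\<exists>F. continuous_on UNIV F \<and>
           (\<forall>e>0. \<exists>K. \<forall>k\<ge>K. \<forall>j. \<bar>(Sstep lam phi ^^ k) f0 j - F (real_of_int j / 2 ^ k)\<bar> \<le> e)"
    using cont conv by blast
qed


end

theorem corollary4p2:
  fixes lam :: real and phi :: "real \<Rightarrow> real"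
  assumes "lam > 1"
    and "lam \<notin> \<nat>"
    and "\<And>x. x \<in> {0..1} \<Longrightarrow> 0 < phi x \<and> phi x \<le> 1"
    and "antimono_on {0..1} phi"
    and "phi 0 = 1"
  shows "uniformly_convergent_scheme (Sstep lam phi)"
proof -
  have "sch lam phi" unfolding sch_def using assms(1,3,4) by blast
  then show ?thesis by (rule sch.main)
qed

end
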